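(* In the $L^\infty$ setting of the context with $E=\mathbb C$ (so $D=L^\infty_\mu(\Omega)$ and $A=L^\infty_\mu(\Omega)$), if $G$ acts metrically freely then for every finite $F\subset G$ and $a_g\in L^\infty_\mu(\Omega)$, $$\Big\|\sum_{g\in F}a_gT_g\Big\|=\operatorname{ess\,sup}_{x\in\Omega}\sum_{g\in F}|a_g(x)|.$$
   Context: $L^\infty$ setting: $(\Omega,\mu)$ is a measure space with $\sigma$-additive $\sigma$-finite measure $\mu$, $G$ a discrete group, $\{\alpha_g\}_{g\in G}$ a group of invertible measurable maps of $\Omega$ ($\alpha_{gh}=\alpha_g\circ\alpha_h$, $\alpha_e=\mathrm{id}$) such that $\alpha_g,\alpha_g^{-1}$ preserve $\mu$-null sets. $A=L^\infty_\mu(\Omega)$ acts on $D=L^\infty_\mu(\Omega)$ by multiplication and $(T_gf)(x)=f(\alpha_g^{-1}(x))$. $G$ acts metrically freely if for every finite $\{g_1,\dots,g_k\}\subset G$ and measurable $\Delta$ with $\mu(\Delta)>0$ there is measurable $\Delta'\subset\Delta$, $\mu(\Delta')>0$, with $\mu(\alpha_{g_i}(\Delta')\cap\alpha_{g_j}(\Delta'))=0$ for $i\neq j$. *)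

theory Defs
  imports "HOL-Probability.Probability"
begin

definition Linf_norm :: "'a measure \<Rightarrow> ('a \<Rightarrow> complex) \<Rightarrow> ereal" where
  "Linf_norm M f = esssup M (\<lambda>x. ereal (cmod (f x)))"

definition Linf :: "'a measure \<Rightarrow> ('a \<Rightarrow> complex) set" where
  "Linf M = {f \<in> borel_measurable M. Linf_norm M f < \<infinity>}"

text \<open>Translation operator T_g f = f o alpha_g^{-1}, with alpha_g^{-1} = alpha_{-g}.\<close>
definition transl :: "('g::group_add \<Rightarrow> 'a \<Rightarrow> 'a) \<Rightarrow> 'g \<Rightarrow> ('a \<Rightarrow> complex) \<Rightarrow> 'a \<Rightarrow> complex" where
  "transl \<alpha> g f = (\<lambda>x. f (\<alpha> (- g) x))"

definition weighted_shift_op ::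
  "('g::group_add \<Rightarrow> 'a \<Rightarrow> 'a) \<Rightarrow> 'g set \<Rightarrow> ('g \<Rightarrow> 'a \<Rightarrow> complex) \<Rightarrow> ('a \<Rightarrow> complex) \<Rightarrow> 'a \<Rightarrow> complex" where
  "weighted_shift_op \<alpha> F a f = (\<lambda>x. \<Sum>g\<in>F. a g x * transl \<alpha> g f x)"

definition Linf_opnorm :: "'a measure \<Rightarrow> (('a \<Rightarrow> complex) \<Rightarrow> 'a \<Rightarrow> complex) \<Rightarrow> ereal" where
  "Linf_opnorm M \<Phi> = (SUP f \<in> {f \<in> borel_measurable M. Linf_norm M f \<le> 1}. Linf_norm M (\<Phi> f))"

definition metrically_free :: "'a measure \<Rightarrow> ('g \<Rightarrow> 'a \<Rightarrow> 'a) \<Rightarrow> bool" where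
  "metrically_free M \<alpha> \<longleftrightarrow>
     (\<forall>K \<Delta>. finite K \<longrightarrow> \<Delta> \<in> sets M \<longrightarrow> emeasure M \<Delta> > 0 \<longrightarrow>
        (\<exists>\<Delta>'. \<Delta>' \<in> sets M \<and> \<Delta>' \<subseteq> \<Delta> \<and> emeasure M \<Delta>' > 0 \<and>
           (\<forall>g\<in>K. \<forall>h\<in>K. g \<noteq> h \<longrightarrow> emeasure M (\<alpha> g ` \<Delta>' \<inter> \<alpha> h ` \<Delta>') = 0)))"

end

theory Submission
  imports Defs
begin

lemma mult_cnj_sgn: "(z::complex) * cnj (sgn z) = complex_of_real (cmod z)"
proof (cases "z = 0")
  case False
  have "z * cnj z = complex_of_real ((cmod z)^2)" using complex_norm_square by simp
  moreover have "z * cnj (sgn z) = (z * cnj z) / complex_of_real (cmod z)"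
    by (simp add: sgn_div_norm scaleR_conv_of_real divide_complex_def mult_ac)
  ultimately show ?thesis using False
    by (simp add: power2_eq_square)
qed simp

theorem mainTheorem8:
  fixes M :: "'a measure" and \<alpha> :: "'g::group_add \<Rightarrow> 'a \<Rightarrow> 'a"
    and F :: "'g set" and a :: "'g \<Rightarrow> 'a \<Rightarrow> complex"
  assumes "sigma_finite_measure M"
    and "\<And>g. \<alpha> g \<in> M \<rightarrow>\<^sub>M M"
    and "\<And>x. x \<in> space M \<Longrightarrow> \<alpha> 0 x = x"
    and "\<And>g h x. x \<in> space M \<Longrightarrow> \<alpha> (g + h) x = \<alpha> g (\<alpha> h x)"
    and "\<And>g N. N \<in> null_sets M \<Longrightarrow> \<alpha> g -` N \<inter> space M \<in> null_sets M"
    and "metrically_free M \<alpha>"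
    and "finite F"
    and "\<And>g. g \<in> F \<Longrightarrow> a g \<in> Linf M"
  shows "Linf_opnorm M (weighted_shift_op \<alpha> F a) =
         esssup M (\<lambda>x. ereal (\<Sum>g\<in>F. cmod (a g x)))"
proof -
  note meas[measurable] = assms(2)
  have am[measurable]: "a g \<in> borel_measurable M" if "g \<in> F" for g
    using assms(8)[OF that] by (simp add: Linf_def)
  have sp: "\<alpha> g x \<in> space M" if "x \<in> space M" for g x
    using meas[of g] that by (meson measurable_space)
  have inv1: "\<alpha> g (\<alpha> (- g) x) = x" if "x \<in> space M" for g x
    using assms(3,4)[OF that] by (metis add.right_inverse)
  have inv2: "\<alpha> (- g) (\<alpha> g x) = x" if "x \<in> space M" for g x
    using assms(3,4)[OF that] by (metis add.left_inverse)
  define \<Phi> where "\<Phi> = weighted_shift_op \<alpha> F a"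
  have \<Phi>meas[measurable]: "\<Phi> f \<in> borel_measurable M" if [measurable]: "f \<in> borel_measurable M" for f
    unfolding \<Phi>_def weighted_shift_op_def transl_def by measurable
  define R where "R = esssup M (\<lambda>x. ereal (\<Sum>g\<in>F. cmod (a g x)))"
  have upper: "Linf_opnorm M \<Phi> \<le> R"
    unfolding Linf_opnorm_def
  proof (rule SUP_least)
    fix f assume "f \<in> {f \<in> borel_measurable M. Linf_norm M f \<le> 1}"
    then have fm[measurable]: "f \<in> borel_measurable M" and fn: "Linf_norm M f \<le> 1" by auto
    have "AE x in M. ereal (cmod (f x)) \<le> 1"
      using esssup_AE[of "\<lambda>x. ereal (cmod (f x))" M]
    proof eventually_elim
      case (elim x)
      from elim fn show ?case unfolding Linf_norm_def by (meson order_trans)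
    qed
    then have "AE x in M. cmod (f x) \<le> 1" by simp
    then have N: "{x \<in> space M. \<not> cmod (f x) \<le> 1} \<in> null_sets M"
      by (subst AE_iff_null[symmetric]) auto
    have "AE x in M. cmod (f (\<alpha> (- g) x)) \<le> 1" for g
      by (rule AE_I'[OF assms(5)[OF N, of "- g"]]) (auto simp: sp)
    then have "AE x in M. \<forall>g\<in>F. cmod (f (\<alpha> (- g) x)) \<le> 1"
      by (intro AE_finite_allI assms(7)) auto
    then have "AE x in M. ereal (cmod (\<Phi> f x)) \<le> ereal (\<Sum>g\<in>F. cmod (a g x))"
    proof (rule AE_mp, intro AE_I2 impI)
      fix x assume h: "\<forall>g\<in>F. cmod (f (\<alpha> (- g) x)) \<le> 1"
      have "cmod (\<Phi> f x) \<le> (\<Sum>g\<in>F. cmod (a g x * f (\<alpha> (- g) x)))"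
        unfolding \<Phi>_def weighted_shift_op_def transl_def by (rule norm_sum)
      also have "\<dots> \<le> (\<Sum>g\<in>F. cmod (a g x))"
        using h by (intro sum_mono) (auto simp: norm_mult intro: mult_left_le)
      finally show "ereal (cmod (\<Phi> f x)) \<le> ereal (\<Sum>g\<in>F. cmod (a g x))" by simp
    qed
    then show "Linf_norm M (\<Phi> f) \<le> R"
      unfolding Linf_norm_def R_def by (intro esssup_AE_mono) auto
  qed
  have lower: "R \<le> Linf_opnorm M \<Phi>"
  proof (rule dense_le)
    fix y assume "y < R"
    show "y \<le> Linf_opnorm M \<Phi>"
    proof (cases y)
      case MInf then show ?thesis by simp
    next
      case PInf then show ?thesis using \<open>y < R\<close> by simp
    next
      case (real c)
      define S where "S = {x \<in> space M. ereal c < ereal (\<Sum>g\<in>F. cmod (a g x))}"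
      have Ss: "S \<in> sets M" unfolding S_def by measurable
      have "emeasure M S > 0" unfolding S_def
        using esssup_pos_measure[of "\<lambda>x. ereal (\<Sum>g\<in>F. cmod (a g x))" M c] \<open>y < R\<close> real
        unfolding R_def by auto
      then obtain \<Delta> where \<Delta>s: "\<Delta> \<in> sets M" and \<Delta>S: "\<Delta> \<subseteq> S" and \<Delta>pos: "emeasure M \<Delta> > 0"
        and disj: "\<And>g h. g \<in> uminus ` F \<Longrightarrow> h \<in> uminus ` F \<Longrightarrow> g \<noteq> h \<Longrightarrow>
             emeasure M (\<alpha> g ` \<Delta> \<inter> \<alpha> h ` \<Delta>) = 0"
        using assms(6) Ss assms(7) unfolding metrically_free_def
        by (metis finite_imageI)
      have \<Delta>sp: "\<Delta> \<subseteq> space M" using \<Delta>s sets.sets_into_space by auto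
      define D where "D g = \<alpha> (- g) ` \<Delta>" for g
      have Deq: "D g = \<alpha> g -` \<Delta> \<inter> space M" for g
      proof
        show "D g \<subseteq> \<alpha> g -` \<Delta> \<inter> space M"
          unfolding D_def using \<Delta>sp by (auto simp: inv1 sp)
        show "\<alpha> g -` \<Delta> \<inter> space M \<subseteq> D g"
          unfolding D_def using inv2 by (auto intro!: image_eqI)
      qed
      have Ds[measurable]: "D g \<in> sets M" for g
        unfolding Deq using \<Delta>s by measurable
      define Ov where "Ov = (\<Union>g\<in>F. \<Union>h\<in>F - {g}. D g \<inter> D h)"
      have Ovnull: "Ov \<in> null_sets M"
        unfolding Ov_def
      proof (intro null_sets_UN' countable_finite assms(7) finite_Diff)
        fix g h assume "g \<in> F" "h \<in> F - {g}"
        then have "emeasure M (D g \<inter> D h) = 0"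
          unfolding D_def by (intro disj) auto
        then show "D g \<inter> D h \<in> null_sets M" by auto
      qed
      have Ovs[measurable]: "Ov \<in> sets M" using Ovnull by auto
      define f where "f y = (if y \<in> Ov then 0 else
          (\<Sum>g\<in>F. if y \<in> D g then cnj (sgn (a g (\<alpha> g y))) else 0))" for y
      have cm[measurable]: "(\<lambda>x. cnj (sgn (a g (\<alpha> g x)))) \<in> borel_measurable M" if "g \<in> F" for g
      proof -
        have "(\<lambda>x. a g (\<alpha> g x)) \<in> borel_measurable M"
          using measurable_compose[OF meas[of g] am[OF that]] by (simp add: o_def)
        moreover have "(\<lambda>z. cnj (sgn z)) \<in> borel_measurable (borel :: complex measure)"
        proof -
          have "cnj \<in> borel_measurable (borel :: complex measure)"
            by (intro borel_measurable_continuous_onI continuous_intros)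
          then show ?thesis using measurable_compose[OF borel_measurable_sgn] by (simp add: o_def)
        qed
        ultimately show ?thesis using measurable_compose by fastforce
      qed
      have fm[measurable]: "f \<in> borel_measurable M"
        unfolding f_def by measurable
      have fval: "f y = cnj (sgn (a g (\<alpha> g y)))" if "y \<notin> Ov" "g \<in> F" "y \<in> D g" for y g
      proof -
        have "(\<Sum>h\<in>F. if y \<in> D h then cnj (sgn (a h (\<alpha> h y))) else 0)
            = (\<Sum>h\<in>{g}. if y \<in> D h then cnj (sgn (a h (\<alpha> h y))) else 0)"
          using that assms(7) by (intro sum.mono_neutral_right) (auto simp: Ov_def)
        then show ?thesis using that by (simp add: f_def)
      qed
      have fb: "cmod (f y) \<le> 1" for y
      proof (cases "y \<notin> Ov \<and> (\<exists>g\<in>F. y \<in> D g)")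
        case True
        then obtain g where "y \<notin> Ov" "g \<in> F" "y \<in> D g" by auto
        then show ?thesis using fval by (simp add: norm_sgn)
      next
        case False
        then show ?thesis by (auto simp: f_def)
      qed
      have fn: "Linf_norm M f \<le> 1"
        unfolding Linf_norm_def using fb by (intro esssup_I) auto
      define N where "N = (\<Union>g\<in>F. \<alpha> (- g) -` Ov \<inter> space M)"
      have Nnull: "N \<in> null_sets M"
        unfolding N_def using assms(5)[OF Ovnull] assms(7)
        by (intro null_sets_UN' countable_finite) auto
      have key: "cmod (\<Phi> f x) = (\<Sum>g\<in>F. cmod (a g x))" if "x \<in> \<Delta>" "x \<notin> N" for x
      proof -
        have xs: "x \<in> space M" using that \<Delta>sp by auto
        have "a g x * f (\<alpha> (- g) x) = complex_of_real (cmod (a g x))" if "g \<in> F" for g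
        proof -
          have "\<alpha> (- g) x \<notin> Ov" using \<open>x \<notin> N\<close> xs that unfolding N_def by auto
          moreover have "\<alpha> (- g) x \<in> D g" using \<open>x \<in> \<Delta>\<close> unfolding D_def by auto
          ultimately have "f (\<alpha> (- g) x) = cnj (sgn (a g x))"
            using fval that inv1[OF xs] by simp
          then show ?thesis by (simp add: mult_cnj_sgn)
        qed
        then have "\<Phi> f x = complex_of_real (\<Sum>g\<in>F. cmod (a g x))"
          unfolding \<Phi>_def weighted_shift_op_def transl_def by simp
        then have "cmod (\<Phi> f x) = \<bar>\<Sum>g\<in>F. cmod (a g x)\<bar>" by (simp only: norm_of_real)
        then show ?thesis by (metis abs_of_nonneg sum_nonneg norm_ge_zero)
      qed
      have "ereal c \<le> Linf_norm M (\<Phi> f)"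
      proof (rule ccontr)
        assume "\<not> ereal c \<le> Linf_norm M (\<Phi> f)"
        then have lt: "Linf_norm M (\<Phi> f) < ereal c" by simp
        have "AE x in M. ereal (cmod (\<Phi> f x)) \<le> Linf_norm M (\<Phi> f)"
          unfolding Linf_norm_def by (rule esssup_AE)
        moreover have "AE x in M. x \<notin> N" using Nnull by (rule AE_not_in)
        ultimately have "AE x in M. x \<notin> \<Delta>"
        proof eventually_elim
          case (elim x)
          show ?case
          proof
            assume "x \<in> \<Delta>"
            then have "ereal c < ereal (cmod (\<Phi> f x))"
              using key[OF _ elim(2)] \<Delta>S by (auto simp: S_def)
            then have "ereal c < Linf_norm M (\<Phi> f)" using elim(1) by (rule less_le_trans)
            then show False using lt by simp
          qed
        qed
        then have "\<Delta> \<in> null_sets M" using \<Delta>s by (simp add: AE_iff_null_sets)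
        then show False using \<Delta>pos by auto
      qed
      also have "\<dots> \<le> Linf_opnorm M \<Phi>"
        unfolding Linf_opnorm_def using fm fn by (intro SUP_upper) auto
      finally show ?thesis using real by simp
    qed
  qed
  show ?thesis using upper lower unfolding \<Phi>_def R_def by simp
qed

end
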